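(* Let $\|\cdot\|$ be a norm on $\mathbb{R}^n$ and let $F:\mathbb{R}^n\to\mathbb{R}^n$ be continuous and strongly monotone with respect to $\|\cdot\|$. Then the set $\{x\in\mathbb{R}^n: F(x)=0\}$ consists of exactly one point.
   Context: A weak pairing (WP) on $\mathbb{R}^n$ is a map $[\![\cdot,\cdot]\!]:\mathbb{R}^n\times\mathbb{R}^n\to\mathbb{R}$ that is subadditive and continuous in its first argument, satisfies $[\![\alpha x,y]\!]=[\![x,\alpha y]\!]=\alpha[\![x,y]\!]$ for $\alpha\ge0$ and $[\![-x,-y]\!]=[\![x,y]\!]$, $[\![x,x]\!]>0$ for $x\ne0$, and $|[\![x,y]\!]|\le[\![x,x]\!]^{1/2}[\![y,y]\!]^{1/2}$; it is compatible with a norm if $[\![x,x]\!]=\|x\|^2$. WPs are assumed to also satisfy Deimling's inequality $[\![x,y]\!]\le\|y\|\lim_{h\to0^+}h^{-1}(\|y+hx\|-\|y\|)$ and the curve norm derivative formula ($\|x(t)\|D^+\|x(t)\|=[\![\dot x(t),x(t)]\!]$ a.e. for differentiable curves). $F$ is strongly monotone w.r.t. $\|\cdot\|$ if for some $c>0$ and some compatible WP, $-[\![-(F(x)-F(y)),x-y]\!]\ge c\|x-y\|^2$ for all $x,y$. *)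

theory Defs
  imports "HOL-Analysis.Analysis"
begin

definition is_norm :: "(real ^ 'n \<Rightarrow> real) \<Rightarrow> bool" where
  "is_norm N \<longleftrightarrow>
     (\<forall>x. 0 \<le> N x) \<and> (\<forall>x. N x = 0 \<longleftrightarrow> x = 0) \<and>
     (\<forall>c x. N (c *\<^sub>R x) = \<bar>c\<bar> * N x) \<and>
     (\<forall>x y. N (x + y) \<le> N x + N y)"

definition weak_pairing :: "(real ^ 'n \<Rightarrow> real ^ 'n \<Rightarrow> real) \<Rightarrow> bool" where
  "weak_pairing WP \<longleftrightarrow>
     (\<forall>x1 x2 y. WP (x1 + x2) y \<le> WP x1 y + WP x2 y) \<and>
     (\<forall>y. continuous_on UNIV (\<lambda>x. WP x y)) \<and>
     (\<forall>a x y. a \<ge> 0 \<longrightarrow> WP (a *\<^sub>R x) y = a * WP x y \<and> WP x (a *\<^sub>R y) = a * WP x y) \<and>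
     (\<forall>x y. WP (- x) (- y) = WP x y) \<and>
     (\<forall>x. x \<noteq> 0 \<longrightarrow> WP x x > 0) \<and>
     (\<forall>x y. \<bar>WP x y\<bar> \<le> sqrt (WP x x) * sqrt (WP y y))"

definition wp_compatible ::
  "(real ^ 'n \<Rightarrow> real ^ 'n \<Rightarrow> real) \<Rightarrow> (real ^ 'n \<Rightarrow> real) \<Rightarrow> bool" where
  "wp_compatible WP N \<longleftrightarrow> (\<forall>x. WP x x = (N x)\<^sup>2)"

definition deimling_ineq ::
  "(real ^ 'n \<Rightarrow> real ^ 'n \<Rightarrow> real) \<Rightarrow> (real ^ 'n \<Rightarrow> real) \<Rightarrow> bool" where
  "deimling_ineq WP N \<longleftrightarrow>
     (\<forall>x y. WP x y \<le> N y * Lim (at_right 0) (\<lambda>h. (N (y + h *\<^sub>R x) - N y) / h))"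

definition curve_norm_derivative ::
  "(real ^ 'n \<Rightarrow> real ^ 'n \<Rightarrow> real) \<Rightarrow> (real ^ 'n \<Rightarrow> real) \<Rightarrow> bool" where
  "curve_norm_derivative WP N \<longleftrightarrow>
     (\<forall>x :: real \<Rightarrow> real ^ 'n. (\<forall>t. x differentiable (at t)) \<longrightarrow>
        (AE t in lborel.
           ereal (N (x t)) * Limsup (at_right 0) (\<lambda>h. ereal ((N (x (t + h)) - N (x t)) / h))
           = ereal (WP (vector_derivative x (at t)) (x t))))"

definition strongly_monotone ::
  "(real ^ 'n \<Rightarrow> real ^ 'n) \<Rightarrow> (real ^ 'n \<Rightarrow> real) \<Rightarrow> bool" where
  "strongly_monotone F N \<longleftrightarrow>
     (\<exists>c > 0. \<exists>WP. weak_pairing WP \<and> wp_compatible WP N \<and> deimling_ineq WP N \<and>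
        curve_norm_derivative WP N \<and>
        (\<forall>x y. - WP (- (F x - F y)) (x - y) \<ge> c * (N (x - y))\<^sup>2))"

end

theory Submission
  imports Defs
begin

theorem lemma24:
  fixes N :: "real ^ 'n \<Rightarrow> real" and F :: "real ^ 'n \<Rightarrow> real ^ 'n"
  assumes "is_norm N"
    and "continuous_on UNIV F"
    and "strongly_monotone F N"
  shows "\<exists>x0. {x. F x = 0} = {x0}"
proof -
  have N0: "\<And>x. 0 \<le> N x" and Nz: "\<And>x. N x = 0 \<longleftrightarrow> x = 0"
    and Nh: "\<And>a x. N (a *\<^sub>R x) = \<bar>a\<bar> * N x" and Nt: "\<And>x y. N (x + y) \<le> N x + N y"
    using assms(1) unfolding is_norm_def by auto
  have Nneg: "N (- x) = N x" for x using Nh[of "-1" x] by simp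
  obtain c WP where c: "c > 0" and wp: "weak_pairing WP" and comp: "wp_compatible WP N"
    and mono: "\<And>x y. - WP (- (F x - F y)) (x - y) \<ge> c * (N (x - y))\<^sup>2"
    using assms(3) unfolding strongly_monotone_def by blast
  have cs: "\<bar>WP u v\<bar> \<le> N u * N v" for u v
  proof -
    have "\<bar>WP u v\<bar> \<le> sqrt (WP u u) * sqrt (WP v v)" using wp unfolding weak_pairing_def by blast
    also have "\<dots> = N u * N v" using comp N0 unfolding wp_compatible_def by simp
    finally show ?thesis .
  qed
  have key: "c * N (x - y) \<le> N (F x - F y)" for x y
  proof (cases "N (x - y) = 0")
    case True then show ?thesis using N0 by simp
  next
    case False
    hence pos: "N (x - y) > 0" using N0[of "x-y"] by linarith
    have "c * (N (x - y))\<^sup>2 \<le> N (- (F x - F y)) * N (x - y)"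
      using mono[of x y] cs[of "- (F x - F y)" "x - y"] by linarith
    hence "(c * N (x - y)) * N (x - y) \<le> N (F x - F y) * N (x - y)"
      using Nneg[of "F x - F y"] by (simp add: power2_eq_square mult.assoc)
    thus ?thesis using pos by simp
  qed
  have inj: "inj F"
  proof (rule injI)
    fix x y assume "F x = F y"
    hence "c * N (x - y) \<le> 0" using key[of x y] Nz[of 0] by simp
    hence "N (x - y) \<le> 0" using c by (simp add: mult_le_0_iff)
    hence "N (x - y) = 0" using N0[of "x-y"] by linarith
    thus "x = y" using Nz by simp
  qed
  have cvx: "convex_on UNIV N"
  proof (rule convex_onI[OF _ convex_UNIV])
    fix t :: real and x y :: "real ^ 'n" assume t: "0 < t" "t < 1"
    have "N ((1 - t) *\<^sub>R x + t *\<^sub>R y) \<le> N ((1 - t) *\<^sub>R x) + N (t *\<^sub>R y)" by (rule Nt)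
    also have "\<dots> = (1 - t) * N x + t * N y" using t by (simp add: Nh)
    finally show "N ((1 - t) *\<^sub>R x + t *\<^sub>R y) \<le> (1 - t) * N x + t * N y" .
  qed
  have Ncont: "continuous_on UNIV N"
    by (rule convex_on_continuous[OF open_UNIV cvx])
  obtain m where m: "m > 0" and mb: "\<And>x. m * norm x \<le> N x"
  proof -
    obtain b :: "real ^ 'n" where b: "b \<in> Basis" using nonempty_Basis by blast
    have "sphere 0 1 \<noteq> ({} :: (real ^ 'n) set)" using b norm_Basis[OF b] by auto
    then obtain z where z: "z \<in> sphere (0::real ^ 'n) 1" and zm: "\<And>y. y \<in> sphere 0 1 \<Longrightarrow> N z \<le> N y"
      using continuous_attains_inf[OF compact_sphere _ continuous_on_subset[OF Ncont]] by blast
    have zpos: "N z > 0" using z Nz N0[of z] by (metis le_less mem_sphere_0 norm_zero zero_neq_one)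
    have "N z * norm x \<le> N x" for x
    proof (cases "x = 0")
      case True then show ?thesis using N0 by simp
    next
      case False
      have "N z \<le> N ((1 / norm x) *\<^sub>R x)" using zm False by simp
      also have "\<dots> = N x / norm x" by (simp add: Nh)
      finally show ?thesis using False by (simp add: field_simps)
    qed
    thus ?thesis using that zpos by blast
  qed
  have opn: "open (range F)"
    by (rule invariance_of_domain[OF assms(2) open_UNIV]) (use inj in simp)
  have cls: "closed (range F)"
    unfolding closed_sequential_limits
  proof (intro allI impI, elim conjE)
    fix y l assume yin: "\<forall>n. y n \<in> range F" and lim: "y \<longlonglongrightarrow> l"
    obtain x where yx: "\<And>n. y n = F (x n)" using yin unfolding image_iff by metis
    have cy: "Cauchy y" using lim by (rule LIMSEQ_imp_Cauchy)
    have "Cauchy x"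
    proof (rule metric_CauchyI)
      fix e :: real assume e: "e > 0"
      have "isCont N 0" using Ncont by (simp add: continuous_on_eq_continuous_at)
      then obtain d where d: "d > 0" and dd: "\<And>w. dist w 0 < d \<Longrightarrow> dist (N w) (N 0) < m * c * e"
        using continuous_at_eps_delta[THEN iffD1] e m c by (metis mult_pos_pos)
      obtain M where M: "\<And>p q. p \<ge> M \<Longrightarrow> q \<ge> M \<Longrightarrow> dist (y p) (y q) < d"
        using metric_CauchyD[OF cy d] by blast
      have "dist (x p) (x q) < e" if "p \<ge> M" "q \<ge> M" for p q
      proof -
        have "N (F (x p) - F (x q)) < m * c * e"
          using dd[of "F (x p) - F (x q)"] M[OF that] yx N0[of "F (x p) - F (x q)"] Nz[of 0] by (simp add: dist_norm)
        moreover have "c * (m * norm (x p - x q)) \<le> N (F (x p) - F (x q))"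
          using key[of "x p" "x q"] mb[of "x p - x q"] c by (smt (verit) mult_left_mono)
        ultimately have "(m * c) * norm (x p - x q) < (m * c) * e" by (simp add: algebra_simps)
        hence "norm (x p - x q) < e" using m c by (simp add: mult_less_cancel_left_pos)
        thus ?thesis by (simp add: dist_norm)
      qed
      thus "\<exists>M. \<forall>p\<ge>M. \<forall>q\<ge>M. dist (x p) (x q) < e" by blast
    qed
    then obtain a where xa: "x \<longlonglongrightarrow> a" using Cauchy_convergent_iff convergent_def by blast
    have "(\<lambda>n. F (x n)) \<longlonglongrightarrow> F a"
      using continuous_on_tendsto_compose[OF assms(2) xa] by simp
    moreover have "y = (\<lambda>n. F (x n))" using yx by auto
    ultimately have "y \<longlonglongrightarrow> F a" by simp
    hence "l = F a" using lim LIMSEQ_unique by blast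
    thus "l \<in> range F" by simp
  qed
  have "range F = UNIV" using clopen[of "range F"] opn cls by auto
  then obtain x0 where x0: "F x0 = 0" by (metis UNIV_I imageE)
  have u: "x = x0" if "F x = 0" for x using x0 that injD[OF inj, of x x0] by simp
  have "{x. F x = 0} = {x0}" using x0 u by blast
  thus ?thesis by blast
qed

end
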